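(* Let $r_0\in\mathbb{R}^7$ and let $\vartheta:\mathbb{R}^7\times\mathbb{R}^2\to\mathbb{R}$ satisfy: (i) for every $z\in\mathbb{R}^2$, $\vartheta(r_0,z)\le0$ iff there exist $t_f\ge0$ and $(\mathbf r,\mathbf u)\in\Pi^{\mathcal K,\mathcal C}_{r_0,t_f}$ with $J(\mathbf r(1),t_f)\le z$; (ii) $z\le z'$ implies $\vartheta(r_0,z)\ge\vartheta(r_0,z')$. With $z^*(r_0)$ the utopian point, define for $\mu\in[0,1]^2$ $\Theta_{r_0}(\mu):=\inf\{\tau\ge0:\vartheta(r_0,z^*(r_0)+\mu\tau)\le0\ \text{and}\ \tau<m_{\mathrm{prop}}/\mu_1\}\in[0,\infty]$ and $\Sigma_{r_0}:=\{z^*(r_0)+\mu\,\Theta_{r_0}(\mu):\mu\in[0,1]^2,\ \mu_1+\mu_2=1\}$. Then the Pareto front $\mathcal F$ (the set of Pareto optimal values) is a subset of $\Sigma_{r_0}$.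
   Context: Fixed data: rotation rate $\Omega\ge0$, exhaust velocity $v_e>0$, $m_{\mathrm{dry}},m_{\mathrm{prop}}>0$, $m_{\min}:=m_{\mathrm{dry}}$, $m_{\max}:=m_{\mathrm{dry}}+m_{\mathrm{prop}}$, radii $0<\rho_{\min}<\rho_{\max}$, a potential $U:\mathbb{R}^3\to\mathbb{R}$ with partials $U_x,U_y,U_z$, a control set $\mathcal U\subset\mathbb{R}^3$. For $r=(x,y,z,v_x,v_y,v_z,m)\in\mathbb{R}^7$, $u\in\mathcal U$: $\tilde f(r,u)=(v_x,v_y,v_z,U_x+\Omega^2x+2\Omega v_y+u_x/m,\ U_y+\Omega^2y-2\Omega v_x+u_y/m,\ U_z+u_z/m,\ -|u|/v_e)$, and $f(r,u,t_f):=t_f\tilde f(r,u)$. $\mathcal U_{ad}$: Lebesgue measurable $\mathcal U$-valued functions. $\mathcal K_0:=\{r:\sqrt{x^2+y^2+z^2}\in[\rho_{\min},\rho_{\max}],\ m\in(m_{\min},m_{\max}]\}$, $\mathcal K:=\{r\in\mathcal K_0:\exists u\in\mathcal U,\ \tilde f(r,u)\cdot\eta_r<0\}$ ($\eta_r$ exterior normal to $\mathcal K$ at $r$), $\mathcal C:=\{r\in\mathcal K:|r_{\mathrm{target}}-r|<\epsilon\}$ for given $r_{\mathrm{target}}$, $\epsilon>0$, assumed nonempty closed. $\Pi_{r_0,t_f}$: pairs $(\mathbf r,\mathbf u)$, $\mathbf r\in W^{1,1}([0,1];\mathbb{R}^7)$, $\mathbf u\in\mathcal U_{ad}$, $\dot{\mathbf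 r}=f(\mathbf r,\mathbf u,t_f)$ on $[0,1]$, $\mathbf r(0)=r_0$; $\Pi^{\mathcal K,\mathcal C}_{r_0,t_f}$: those with $\mathbf r(s)\in\mathcal K$ for all $s$ and $\mathbf r(1)$ in the interior of $\mathcal C$; $\pi:=\{(r_0,t_f)\in\mathcal K\times[0,\infty):\Pi^{\mathcal K,\mathcal C}_{r_0,t_f}\neq\emptyset\}$. $J(r_f,t_f):=(-(r_f)_7,\ t_f)$. Orders on $\mathbb{R}^2$ are componentwise ($<$ meaning strict in every component). Utopian point: $z^*_i(r_0):=\inf\{J_i(\mathbf r(1),t_f):(r_0,t_f)\in\pi,(\mathbf r,\mathbf u)\in\Pi^{\mathcal K,\mathcal C}_{r_0,t_f}\}$. An admissible trajectory $(\mathbf r,\mathbf u)\in\Pi^{\mathcal K,\mathcal C}_{r_0,t_f}$ is dominated by $(\mathbf x,\mathbf v)\in\Pi^{\mathcal K,\mathcal C}_{r_0,\hat t_f}$ if $J(\mathbf x(1),\hat t_f)\le J(\mathbf r(1),t_f)$ and $J(\mathbf x(1),\hat t_f)\ne J(\mathbf r(1),t_f)$. The Pareto front $\mathcal F$ is the set of values $J(\mathbf r(1),t_f)$ of admissible trajectories (over all $t_f\ge0$) that are not dominated by any admissible trajectory from $r_0$; equivalently, values $z$ of admissible trajectories such that no admissible value dominates $z$. *)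

theory Defs
  imports "HOL-Analysis.Analysis"
begin

text \<open>Fixed problem data (rotation rate, exhaust velocity, masses, radii,
  partials of the potential, control set, target and tolerance).\<close>
record params =
  Om :: real
  ve :: real
  mdry :: real
  mprop :: real
  rhomin :: real
  rhomax :: real
  Ux :: "real^3 \<Rightarrow> real"
  Uy :: "real^3 \<Rightarrow> real"
  Uz :: "real^3 \<Rightarrow> real"
  Uset :: "(real^3) set"
  rtarget :: "real^7"
  eps :: real

definition mmin :: "params \<Rightarrow> real" where "mmin P = mdry P"
definition mmax :: "params \<Rightarrow> real" where "mmax P = mdry P + mprop P"

text \<open>Position part (x,y,z) of a state r = (x,y,z,vx,vy,vz,m).\<close>
definition pos :: "real^7 \<Rightarrow> real^3" where
  "pos r = vector [r$1, r$2, r$3]"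

definition ftilde :: "params \<Rightarrow> real^7 \<Rightarrow> real^3 \<Rightarrow> real^7" where
  "ftilde P r u = vector
     [ r$4, r$5, r$6,
       Ux P (pos r) + (Om P)^2 * r$1 + 2 * Om P * r$5 + u$1 / r$7,
       Uy P (pos r) + (Om P)^2 * r$2 - 2 * Om P * r$4 + u$2 / r$7,
       Uz P (pos r) + u$3 / r$7,
       - norm u / ve P ]"

definition fdyn :: "params \<Rightarrow> real^7 \<Rightarrow> real^3 \<Rightarrow> real \<Rightarrow> real^7" where
  "fdyn P r u tf = tf *\<^sub>R ftilde P r u"

definition Uad :: "params \<Rightarrow> (real \<Rightarrow> real^3) set" where
  "Uad P = {u. u \<in> borel_measurable (lebesgue_on {0..1}) \<and> (\<forall>s\<in>{0..1}. u s \<in> Uset P)}"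

definition K0 :: "params \<Rightarrow> (real^7) set" where
  "K0 P = {r. norm (pos r) \<in> {rhomin P .. rhomax P} \<and> r$7 \<in> {mmin P <.. mmax P}}"

definition ext_normals :: "params \<Rightarrow> real^7 \<Rightarrow> (real^7) set" where
  "ext_normals P r =
     (if norm (pos r) = rhomax P
      then {vector [r$1 / norm (pos r), r$2 / norm (pos r), r$3 / norm (pos r), 0, 0, 0, 0]} else {})
   \<union> (if norm (pos r) = rhomin P
      then {vector [- r$1 / norm (pos r), - r$2 / norm (pos r), - r$3 / norm (pos r), 0, 0, 0, 0]} else {})
   \<union> (if r$7 = mmax P then {axis 7 1} else {})"

definition Kset :: "params \<Rightarrow> (real^7) set" where
  "Kset P = {r \<in> K0 P. \<exists>u\<in>Uset P. \<forall>\<eta>\<in>ext_normals P r. ftilde P r u \<bullet> \<eta> < 0}"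

definition Cset :: "params \<Rightarrow> (real^7) set" where
  "Cset P = {r \<in> Kset P. norm (rtarget P - r) < eps P}"

text \<open>\<open>\<Pi>_{r0,tf}\<close>: W^{1,1} solutions on [0,1] of \<open>r' = f(r,u,tf)\<close>, r(0)=r0,
  expressed as: the right-hand side is Lebesgue integrable on [0,1] and r is its
  indefinite integral starting at r0.\<close>
definition Pi_traj :: "params \<Rightarrow> real^7 \<Rightarrow> real \<Rightarrow> ((real \<Rightarrow> (real^7)) \<times> (real \<Rightarrow> (real^3))) set" where
  "Pi_traj P r0 tf = {(r, u). u \<in> Uad P \<and>
      (\<lambda>s. fdyn P (r s) (u s) tf) absolutely_integrable_on {0..1} \<and>
      (\<forall>s\<in>{0..1}. r s = r0 + integral {0..s} (\<lambda>\<sigma>. fdyn P (r \<sigma>) (u \<sigma>) tf)) \<and>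
      r 0 = r0}"

definition Pi_KC :: "params \<Rightarrow> real^7 \<Rightarrow> real \<Rightarrow> ((real \<Rightarrow> (real^7)) \<times> (real \<Rightarrow> (real^3))) set" where
  "Pi_KC P r0 tf = {(r, u) \<in> Pi_traj P r0 tf. (\<forall>s\<in>{0..1}. r s \<in> Kset P) \<and> r 1 \<in> interior (Cset P)}"

definition pi_set :: "params \<Rightarrow> ((real^7) \<times> real) set" where
  "pi_set P = {(r0, tf). r0 \<in> Kset P \<and> tf \<ge> 0 \<and> Pi_KC P r0 tf \<noteq> {}}"

definition Jobj :: "real^7 \<Rightarrow> real \<Rightarrow> real^2" where
  "Jobj rf tf = vector [- rf$7, tf]"

definition utopia :: "params \<Rightarrow> real^7 \<Rightarrow> real^2" where
  "utopia P r0 = (\<chi> i. Inf {Jobj (r 1) tf $ i | tf r u. (r0, tf) \<in> pi_set P \<and> (r, u) \<in> Pi_KC P r0 tf})"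

definition adm_values :: "params \<Rightarrow> real^7 \<Rightarrow> (real^2) set" where
  "adm_values P r0 = {Jobj (r 1) tf | tf r u. tf \<ge> 0 \<and> (r, u) \<in> Pi_KC P r0 tf}"

definition pareto_front :: "params \<Rightarrow> real^7 \<Rightarrow> (real^2) set" where
  "pareto_front P r0 = {z \<in> adm_values P r0. \<not> (\<exists>z'\<in>adm_values P r0. z' \<le> z \<and> z' \<noteq> z)}"

text \<open>\<open>\<Theta>_{r0}(\<mu>)\<close>, valued in [0,\<infinity>]; the constraint \<open>\<tau> < m_prop/\<mu>_1\<close> is written
  \<open>\<tau> \<mu>_1 < m_prop\<close> so that it is vacuous for \<open>\<mu>_1 = 0\<close> (m_prop/0 = \<infinity>).\<close>
definition Theta :: "params \<Rightarrow> (real^7 \<Rightarrow> real^2 \<Rightarrow> real) \<Rightarrow> real^7 \<Rightarrow> real^2 \<Rightarrow> ereal" where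
  "Theta P th r0 \<mu> = Inf (ereal ` {\<tau>. \<tau> \<ge> 0 \<and> th r0 (utopia P r0 + \<tau> *\<^sub>R \<mu>) \<le> 0 \<and> \<tau> * \<mu>$1 < mprop P})"

definition Sigma_set :: "params \<Rightarrow> (real^7 \<Rightarrow> real^2 \<Rightarrow> real) \<Rightarrow> real^7 \<Rightarrow> (real^2) set" where
  "Sigma_set P th r0 = {utopia P r0 + real_of_ereal (Theta P th r0 \<mu>) *\<^sub>R \<mu> | \<mu>.
      (\<forall>i. \<mu>$i \<in> {0..1}) \<and> \<mu>$1 + \<mu>$2 = 1 \<and> Theta P th r0 \<mu> < \<infinity>}"

end

theory Submission
  imports Defs
begin
lemma PiKC_K: "(r,u) \<in> Pi_KC P r0 tf \<Longrightarrow> s \<in> {0..1} \<Longrightarrow> r s \<in> Kset P" by (simp add: Pi_KC_def)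
lemma PiKC_0: "(r,u) \<in> Pi_KC P r0 tf \<Longrightarrow> r 0 = r0" by (simp add: Pi_KC_def Pi_traj_def)
lemma K_m: "r \<in> Kset P \<Longrightarrow> mmin P < r$7 \<and> r$7 \<le> mmax P" by (simp add: Kset_def K0_def)
lemma PiKC_r0: "(r,u) \<in> Pi_KC P r0 tf \<Longrightarrow> r0 \<in> Kset P" by (metis PiKC_K PiKC_0 atLeastAtMost_iff zero_le_one order_refl)
lemma PiKC_1: "(r,u) \<in> Pi_KC P r0 tf \<Longrightarrow> r 1 \<in> Kset P" by (simp add: PiKC_K)

lemma utopia_le:
  assumes "tf \<ge> 0" "(r, u) \<in> Pi_KC P r0 tf"
  shows "utopia P r0 \<le> Jobj (r 1) tf"
proof -
  have r0K: "r0 \<in> Kset P" using assms(2) by (rule PiKC_r0)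
  have pis: "(r0, tf) \<in> pi_set P" using assms r0K unfolding pi_set_def by blast
  let ?A = "\<lambda>i. {Jobj (r 1) tf $ i | tf r u. (r0, tf) \<in> pi_set P \<and> (r, u) \<in> Pi_KC P r0 tf}"
  have bdd: "bdd_below (?A i)" for i
  proof (rule bdd_belowI[where m="- mmax P - 0 - (0::real) - 0 - 0 + 0 - \<bar>mmax P\<bar> - 0"])
    fix x assume "x \<in> ?A i"
    then obtain tf' r' u' where x: "x = Jobj (r' 1) tf' $ i" "(r0, tf') \<in> pi_set P"
      "(r', u') \<in> Pi_KC P r0 tf'" by blast
    have "r' 1 $ 7 \<le> mmax P" using K_m[OF PiKC_1[OF x(3)]] by simp
    moreover have "tf' \<ge> 0" using x(2) unfolding pi_set_def by auto
    ultimately show "- mmax P - 0 - (0::real) - 0 - 0 + 0 - \<bar>mmax P\<bar> - 0 \<le> x"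
      using x(1) exhaust_2[of i] by (auto simp: Jobj_def)
  qed
  show ?thesis unfolding less_eq_vec_def
  proof
    fix i
    have "utopia P r0 $ i = Inf (?A i)" unfolding utopia_def by simp
    also have "\<dots> \<le> Jobj (r 1) tf $ i"
      by (rule cInf_lower, use pis assms(2) in blast, rule bdd)
    finally show "utopia P r0 $ i \<le> Jobj (r 1) tf $ i" .
  qed
qed

theorem lemma1:
  fixes P :: params and U :: "real^3 \<Rightarrow> real"
    and th :: "real^7 \<Rightarrow> real^2 \<Rightarrow> real" and r0 :: "real^7"
  assumes "Om P \<ge> 0" and "ve P > 0" and "mdry P > 0" and "mprop P > 0"
    and "0 < rhomin P" and "rhomin P < rhomax P" and "eps P > 0"
    and "\<And>p. ((\<lambda>s. U (p + s *\<^sub>R axis 1 1)) has_real_derivative Ux P p) (at 0)"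
    and "\<And>p. ((\<lambda>s. U (p + s *\<^sub>R axis 2 1)) has_real_derivative Uy P p) (at 0)"
    and "\<And>p. ((\<lambda>s. U (p + s *\<^sub>R axis 3 1)) has_real_derivative Uz P p) (at 0)"
    and "Cset P \<noteq> {}" and "closed (Cset P)"
    and th_i: "\<And>z. th r0 z \<le> 0 \<longleftrightarrow>
                 (\<exists>tf \<ge> 0. \<exists>r u. (r, u) \<in> Pi_KC P r0 tf \<and> Jobj (r 1) tf \<le> z)"
    and th_ii: "\<And>z z'. z \<le> z' \<Longrightarrow> th r0 z \<ge> th r0 z'"
  shows "pareto_front P r0 \<subseteq> Sigma_set P th r0"
proof
  fix z assume zp: "z \<in> pareto_front P r0"
  then obtain tf r u where z: "z = Jobj (r 1) tf" "tf \<ge> 0" "(r, u) \<in> Pi_KC P r0 tf"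
    unfolding pareto_front_def adm_values_def by blast
  have nodom: "\<not> (w \<le> z \<and> w \<noteq> z)" if "w \<in> adm_values P r0" for w
    using zp that unfolding pareto_front_def by blast
  define zs where "zs = utopia P r0"
  have zsz: "zs \<le> z" using utopia_le z unfolding zs_def by blast
  have thz: "th r0 z \<le> 0" using th_i z by blast
  have "r 1 $ 7 > mmin P" using K_m[OF PiKC_1[OF z(3)]] by simp
  then have z1: "z $ 1 < - mmin P" using z(1) by (simp add: Jobj_def)
  have zs1: "zs $ 1 \<ge> - mmax P"
  proof -
    have r0K: "r0 \<in> Kset P" using z(3) by (rule PiKC_r0)
    have ne: "{Jobj (r 1) tf $ 1 | tf r u. (r0, tf) \<in> pi_set P \<and> (r, u) \<in> Pi_KC P r0 tf} \<noteq> {}"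
      using z r0K unfolding pi_set_def by blast
    have "zs $ 1 = Inf {Jobj (r 1) tf $ 1 | tf r u. (r0, tf) \<in> pi_set P \<and> (r, u) \<in> Pi_KC P r0 tf}"
      unfolding zs_def utopia_def by simp
    also have "\<dots> \<ge> - mmax P"
    proof (rule cInf_greatest[OF ne])
      fix x assume "x \<in> {Jobj (r 1) tf $ 1 | tf r u. (r0, tf) \<in> pi_set P \<and> (r, u) \<in> Pi_KC P r0 tf}"
      then obtain tf r u where "x = Jobj (r 1) tf $ 1" "(r, u) \<in> Pi_KC P r0 tf" by blast
      then show "- mmax P \<le> x" using K_m[OF PiKC_1, of r u P r0 tf] by (simp add: Jobj_def)
    qed
    finally show ?thesis .
  qed
  define d where "d = z - zs"
  have d0: "d $ 1 \<ge> 0" "d $ 2 \<ge> 0" using zsz unfolding d_def less_eq_vec_def by auto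
  have d1: "d $ 1 < mprop P" using z1 zs1 unfolding d_def mmin_def mmax_def by simp
  show "z \<in> Sigma_set P th r0"
  proof (cases "d = 0")
    case True
    define \<mu> :: "real^2" where "\<mu> = vector [1, 0]"
    have "ereal 0 \<in> ereal ` {\<tau>. \<tau> \<ge> 0 \<and> th r0 (utopia P r0 + \<tau> *\<^sub>R \<mu>) \<le> 0 \<and> \<tau> * \<mu>$1 < mprop P}"
      using True thz assms(4) unfolding d_def zs_def by auto
    then have "Theta P th r0 \<mu> \<le> ereal 0" unfolding Theta_def by (rule Inf_lower)
    moreover have "Theta P th r0 \<mu> \<ge> 0" unfolding Theta_def by (auto intro!: Inf_greatest)
    ultimately have T: "Theta P th r0 \<mu> = 0" by (simp add: zero_ereal_def antisym)
    show ?thesis unfolding Sigma_set_def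
      apply (rule CollectI, rule exI[of _ \<mu>])
    proof (intro conjI)
      have "z = zs" using True unfolding d_def by simp
      then show "z = utopia P r0 + real_of_ereal (Theta P th r0 \<mu>) *\<^sub>R \<mu>"
        using T unfolding zs_def by simp
      show "\<forall>i. \<mu> $ i \<in> {0..1}" unfolding forall_2 \<mu>_def by simp
      show "\<mu> $ 1 + \<mu> $ 2 = 1" unfolding \<mu>_def by simp
      show "Theta P th r0 \<mu> < \<infinity>" using T by simp
    qed
  next
    case False
    define s where "s = d $ 1 + d $ 2"
    have spos: "s > 0"
    proof (rule ccontr)
      assume "\<not> s > 0"
      then have "d $ 1 = 0" "d $ 2 = 0" using d0 unfolding s_def by linarith+
      then have "d = 0" unfolding vec_eq_iff forall_2 by simp
      then show False using False by simp
    qed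
    define \<mu> where "\<mu> = (1 / s) *\<^sub>R d"
    have zeq: "z = zs + s *\<^sub>R \<mu>" using spos unfolding \<mu>_def d_def by simp
    have mu0: "\<mu> $ 1 \<ge> 0" "\<mu> $ 2 \<ge> 0" using d0 spos unfolding \<mu>_def by auto
    have "\<mu> $ 1 + \<mu> $ 2 = (d $ 1 + d $ 2) / s" unfolding \<mu>_def by (simp add: add_divide_distrib)
    also have "\<dots> = 1" using spos unfolding s_def by simp
    finally have musum: "\<mu> $ 1 + \<mu> $ 2 = 1" .
    let ?S = "{\<tau>. \<tau> \<ge> 0 \<and> th r0 (utopia P r0 + \<tau> *\<^sub>R \<mu>) \<le> 0 \<and> \<tau> * \<mu>$1 < mprop P}"
    have sS: "s \<in> ?S" using spos thz d1 zeq unfolding zs_def \<mu>_def by auto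
    have low: "\<tau> \<ge> s" if "\<tau> \<in> ?S" for \<tau>
    proof (rule ccontr)
      assume "\<not> s \<le> \<tau>"
      hence lt: "\<tau> < s" by simp
      from that have "th r0 (zs + \<tau> *\<^sub>R \<mu>) \<le> 0" "\<tau> \<ge> 0" unfolding zs_def by auto
      then obtain tf' r' u' where w: "tf' \<ge> 0" "(r', u') \<in> Pi_KC P r0 tf'"
        "Jobj (r' 1) tf' \<le> zs + \<tau> *\<^sub>R \<mu>" using th_i by blast
      have wa: "Jobj (r' 1) tf' \<in> adm_values P r0" using w unfolding adm_values_def by blast
      obtain i where i: "\<mu> $ i > 0"
      proof (cases "\<mu> $ 1 > 0")
        case True then show ?thesis using that by blast
      next
        case False then have "\<mu> $ 2 > 0" using mu0 musum by linarith
        then show ?thesis using that by blast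
      qed
      have le: "zs + \<tau> *\<^sub>R \<mu> \<le> z" unfolding zeq less_eq_vec_def using mu0 lt \<open>\<tau> \<ge> 0\<close>
        by (auto simp: forall_2 intro!: mult_right_mono)
      have "(zs + \<tau> *\<^sub>R \<mu>) $ i < z $ i" unfolding zeq using i lt by simp
      then have "Jobj (r' 1) tf' $ i < z $ i" using w(3) unfolding less_eq_vec_def
        by (meson order_le_less_trans)
      then have "Jobj (r' 1) tf' \<noteq> z" by auto
      moreover have "Jobj (r' 1) tf' \<le> z" using w(3) le by (rule order_trans)
      ultimately show False using nodom[OF wa] by blast
    qed
    have T: "Theta P th r0 \<mu> = ereal s" unfolding Theta_def
      by (rule antisym, rule Inf_lower, use sS in blast, rule Inf_greatest, use low in auto)
    show ?thesis unfolding Sigma_set_def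
      apply (rule CollectI, rule exI[of _ \<mu>])
      proof (intro conjI)
      show "z = utopia P r0 + real_of_ereal (Theta P th r0 \<mu>) *\<^sub>R \<mu>"
        using T zeq unfolding zs_def by simp
      show "\<forall>i. \<mu> $ i \<in> {0..1}" unfolding forall_2 using mu0 musum by simp
      show "\<mu> $ 1 + \<mu> $ 2 = 1" by (rule musum)
      show "Theta P th r0 \<mu> < \<infinity>" using T by simp
    qed
  qed
qed

end
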